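(* Let $f=\sum a_nq^n\in S_k(\Gamma_1(N_f),\epsilon_f)$ and $g=\sum b_nq^n\in S_k(\Gamma_1(N_g),\epsilon_g)$ be normalized cuspidal Hecke eigenforms of the same weight $k$, with $p\nmid N_fN_g$, whose coefficients and character values lie in $\mathcal{O}$. If $f$ and $g$ are $p^r$-congruent, i.e. $a_m\equiv b_m\bmod p^r\mathcal{O}$ for all integers $m$ coprime to $N_fN_g$, then $\epsilon_f(p)\equiv\epsilon_g(p)\bmod p^r\mathcal{O}$.
   Context: $p$ is an odd prime with a fixed embedding $\overline{\mathbb{Q}}\hookrightarrow\mathbb{C}_p$; $E/\mathbb{Q}_p$ is a finite extension containing all Fourier coefficients of $f,g$ and values of $\epsilon_f,\epsilon_g$, and $\mathcal{O}$ is its ring of integers; $r$ is a positive integer. *)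

theory Defs
  imports "HOL-Complex_Analysis.Complex_Analysis" "HOL-Computational_Algebra.Computational_Algebra"
begin

definition dirichlet_char :: "nat \<Rightarrow> (int \<Rightarrow> complex) \<Rightarrow> bool" where
  "dirichlet_char N eps \<longleftrightarrow> N \<ge> 1 \<and> eps 1 = 1
     \<and> (\<forall>m n. eps (m * n) = eps m * eps n)
     \<and> (\<forall>n. eps (n + int N) = eps n)
     \<and> (\<forall>n. eps n \<noteq> 0 \<longleftrightarrow> coprime n (int N))"

definition upper_half_plane :: "complex set" where
  "upper_half_plane = {z. Im z > 0}"

definition modular_Gamma0_char :: "nat \<Rightarrow> nat \<Rightarrow> (int \<Rightarrow> complex) \<Rightarrow> (complex \<Rightarrow> complex) \<Rightarrow> bool" where
  "modular_Gamma0_char k N eps f \<longleftrightarrow>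
     (\<forall>a b c d z. a * d - b * c = 1 \<and> int N dvd c \<and> Im z > 0 \<longrightarrow>
        f ((of_int a * z + of_int b) / (of_int c * z + of_int d))
          = eps d * (of_int c * z + of_int d) ^ k * f z)"

text \<open>Vanishing at every cusp: for every gamma in SL_2(Z), the slashed function
  (f|_k gamma)(z) = (c z + d)^(-k) f(gamma z) tends to 0 uniformly as Im z tends to infinity.\<close>
definition vanishes_at_cusps :: "nat \<Rightarrow> (complex \<Rightarrow> complex) \<Rightarrow> bool" where
  "vanishes_at_cusps k f \<longleftrightarrow>
     (\<forall>a b c d :: int. a * d - b * c = 1 \<longrightarrow>
        (\<forall>e > 0. \<exists>Y. \<forall>z. Im z > Y \<longrightarrow>
           norm (f ((of_int a * z + of_int b) / (of_int c * z + of_int d))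
                 / (of_int c * z + of_int d) ^ k) < e))"

definition cusp_form :: "nat \<Rightarrow> nat \<Rightarrow> (int \<Rightarrow> complex) \<Rightarrow> (complex \<Rightarrow> complex) \<Rightarrow> bool" where
  "cusp_form k N eps f \<longleftrightarrow> dirichlet_char N eps \<and> f holomorphic_on upper_half_plane
     \<and> modular_Gamma0_char k N eps f \<and> vanishes_at_cusps k f"

definition has_q_expansion :: "(complex \<Rightarrow> complex) \<Rightarrow> (nat \<Rightarrow> complex) \<Rightarrow> bool" where
  "has_q_expansion f a \<longleftrightarrow>
     (\<forall>z. Im z > 0 \<longrightarrow> (\<lambda>n. a n * exp (2 * of_real pi * \<i> * of_nat n * z)) sums f z)"

text \<open>Hecke operator T_n on S_k(Gamma_1(N), eps) on q-expansions
  (Diamond--Shurman, Prop. 5.3.1): the m-th coefficient of T_n f is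
  sum over d | gcd(m,n) of eps(d) d^(k-1) a(mn/d^2).\<close>
definition hecke_coeff :: "nat \<Rightarrow> (int \<Rightarrow> complex) \<Rightarrow> nat \<Rightarrow> (nat \<Rightarrow> complex) \<Rightarrow> nat \<Rightarrow> complex" where
  "hecke_coeff k eps n a m =
     (\<Sum>d | d dvd gcd m n. eps (int d) * of_nat d ^ (k - 1) * a (m * n div (d * d)))"

definition normalized_eigenform ::
  "nat \<Rightarrow> nat \<Rightarrow> (int \<Rightarrow> complex) \<Rightarrow> (complex \<Rightarrow> complex) \<Rightarrow> (nat \<Rightarrow> complex) \<Rightarrow> bool" where
  "normalized_eigenform k N eps f a \<longleftrightarrow>
     cusp_form k N eps f \<and> has_q_expansion f a \<and> a 1 = 1 \<and>
     (\<forall>n \<ge> 1. \<exists>c. \<forall>m. hecke_coeff k eps n a m = c * a m)"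

text \<open>A fixed embedding Qbar into C_p amounts to a valuation v on the algebraic numbers
  (inside C) extending the p-adic valuation, normalised by v(p) = 1.\<close>
definition padic_valuation_alg :: "nat \<Rightarrow> (complex \<Rightarrow> real) \<Rightarrow> bool" where
  "padic_valuation_alg p v \<longleftrightarrow>
     v (of_nat p) = 1 \<and>
     (\<forall>x y. algebraic x \<and> algebraic y \<and> x \<noteq> 0 \<and> y \<noteq> 0 \<longrightarrow> v (x * y) = v x + v y) \<and>
     (\<forall>x y. algebraic x \<and> algebraic y \<and> x \<noteq> 0 \<and> y \<noteq> 0 \<and> x + y \<noteq> 0 \<longrightarrow>
            v (x + y) \<ge> min (v x) (v y))"

text \<open>x lies in O (valuation ring), and x == y mod p^r O.\<close>
definition integral_at :: "(complex \<Rightarrow> real) \<Rightarrow> complex \<Rightarrow> bool" where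
  "integral_at v x \<longleftrightarrow> algebraic x \<and> (x = 0 \<or> v x \<ge> 0)"

definition cong_ppow :: "(complex \<Rightarrow> real) \<Rightarrow> nat \<Rightarrow> complex \<Rightarrow> complex \<Rightarrow> bool" where
  "cong_ppow v r x y \<longleftrightarrow> x = y \<or> v (x - y) \<ge> real r"

end

theory Submission
  imports Defs "HOL-Algebra.Finite_Extensions"
begin


definition CR :: "complex ring" where
  "CR = \<lparr>carrier = UNIV, monoid.mult = (\<lambda>x y. x * y), one = 1, ring.zero = 0, add = (\<lambda>x y. x + y)\<rparr>"

lemma CR_field: "field CR"
proof -
  have "\<exists>y. x + y = 0" for x :: complex
    using add.right_inverse by blast
  moreover have "x \<noteq> 0 \<Longrightarrow> \<exists>y. x * y = 1" for x :: complex
    by (rule exI[of _ "inverse x"]) auto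
  ultimately show ?thesis
    unfolding CR_def using add.right_inverse
    by unfold_locales (auto simp:algebra_simps Units_def)
qed

lemma CR_simps [simp]: "carrier CR = UNIV" "mult CR = (*)" "one CR = 1" "zero CR = 0" "add CR = (+)"
  by (auto simp: CR_def)

lemma CR_ring: "ring CR" using CR_field field.is_ring by blast
lemma CR_domain: "domain CR" using CR_field field.axioms(1) by blast

lemma CR_pow [simp]: "x [^]\<^bsub>CR\<^esub> (n::nat) = x ^ n"
  by (induction n) auto

lemma CR_minus [simp]: "\<ominus>\<^bsub>CR\<^esub> x = - x"
  using abelian_group.minus_equality[OF ring.is_abelian_group[OF CR_ring], of "-x" x] by simp

lemma CR_inv [simp]: "x \<noteq> 0 \<Longrightarrow> inv\<^bsub>CR\<^esub> x = inverse x"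
  using monoid.inv_char[OF ring.is_monoid[OF CR_ring], of x "inverse x"] by simp

lemma Rats_subfield: "subfield \<rat> CR"
proof (rule field.subfieldI'[OF CR_field ring.subringI[OF CR_ring]])
  show "\<rat> \<subseteq> carrier CR" by simp
qed auto

fun hp :: "complex list \<Rightarrow> complex poly" where
  "hp [] = 0"
| "hp (c # p) = Polynomial.monom c (length p) + hp p"

lemma hp_eval: "ring.eval CR p x = poly (hp p) x"
  by (induction p) (auto simp: poly_monom ring.eval.simps[OF CR_ring])

lemma hp_coeff: "Polynomial.coeff (hp p) i = (if i < length p then p ! (length p - 1 - i) else 0)"
  by (induction p) (auto simp: coeff_monom nth_Cons split: nat.splits, metis Suc_diff_Suc diff_Suc_1)

lemma Rats_subring: "subring \<rat> CR"
  using Rats_subfield subfieldE(1) by blast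

lemma alg_to_CR:
  assumes "algebraic x" shows "\<not> ring.transcendental CR \<rat> x"
proof -
  obtain q where q: "\<And>i. Polynomial.coeff q i \<in> \<int>" "q \<noteq> 0" "poly q x = 0"
    using assms algebraicE by blast
  define l where "l = rev (coeffs q)"
  have len: "length l = Suc (Polynomial.degree q)" by (simp add: l_def length_coeffs q(2))
  have "set l \<subseteq> \<rat>" using q(1) unfolding l_def
    by (auto simp: coeffs_def Ints_subset_Rats[THEN subsetD])
  moreover have "hd l \<noteq> 0" using q(2)
    by (simp add: l_def hd_rev last_coeffs_eq_coeff_degree)
  ultimately have "l \<in> carrier (\<rat>[X]\<^bsub>CR\<^esub>)"
    by (auto simp: univ_poly_def polynomial_def)
  moreover have "l \<noteq> []" using len by auto
  moreover have "hp l = q"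
  proof (rule poly_eqI)
    fix i
    show "Polynomial.coeff (hp l) i = Polynomial.coeff q i"
    proof (cases "i < length l")
      case True
      then show ?thesis unfolding hp_coeff using len q(2)
        by (auto simp: l_def rev_nth coeffs_nth length_coeffs)
    next
      case False
      then show ?thesis unfolding hp_coeff using len by (auto intro!: coeff_eq_0 simp: not_less)
    qed
  qed
  ultimately show ?thesis
    using ring.algebraicI[OF CR_ring, of l \<rat> x] q(3) hp_eval[of l x]
    by (simp add: over_def)
qed

lemma CR_to_alg:
  assumes "\<not> ring.transcendental CR \<rat> x" shows "algebraic x"
proof -
  obtain p where p: "p \<in> carrier (\<rat>[X]\<^bsub>CR\<^esub>)" "p \<noteq> []" "ring.eval CR p x = 0"
    using domain.algebraicE[OF CR_domain Rats_subring, of x] assms by (auto simp: over_def)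
  have set: "set p \<subseteq> \<rat>" "hd p \<noteq> 0" using p(1,2) by (auto simp: univ_poly_def polynomial_def)
  have "Polynomial.coeff (hp p) i \<in> \<rat>" for i
    unfolding hp_coeff using set(1) by auto
  moreover have "hp p \<noteq> 0"
  proof
    assume "hp p = 0"
    then have "Polynomial.coeff (hp p) (length p - 1) = 0" by simp
    then show False unfolding hp_coeff using p(2) set(2) by (cases p) auto
  qed
  moreover have "poly (hp p) x = 0" using p(3) hp_eval by metis
  ultimately show ?thesis unfolding algebraic_altdef by blast
qed

lemma algebraic_add [intro]: fixes x y :: complex shows "algebraic x \<Longrightarrow> algebraic y \<Longrightarrow> algebraic (x + y)"
proof -
  assume "algebraic x" "algebraic y"
  then have x: "x \<in> {x \<in> carrier CR. \<not> ring.transcendental CR \<rat> x}" "y \<in> {x \<in> carrier CR. \<not> ring.transcendental CR \<rat> x}"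
    using alg_to_CR by (auto simp: over_def)
  have "subring {x \<in> carrier CR. \<not> ring.transcendental CR \<rat> x} CR"
    using subfieldE(1)[OF field.subfield_of_algebraics[OF CR_field Rats_subfield]] by (simp add: over_def)
  from subringE(7)[OF this x]
  show ?thesis using CR_to_alg by (auto simp: over_def)
qed

lemma algebraic_mult [intro]: fixes x y :: complex shows "algebraic x \<Longrightarrow> algebraic y \<Longrightarrow> algebraic (x * y)"
proof -
  assume "algebraic x" "algebraic y"
  then have x: "x \<in> {x \<in> carrier CR. \<not> ring.transcendental CR \<rat> x}" "y \<in> {x \<in> carrier CR. \<not> ring.transcendental CR \<rat> x}"
    using alg_to_CR by (auto simp: over_def)
  have "subring {x \<in> carrier CR. \<not> ring.transcendental CR \<rat> x} CR"
    using subfieldE(1)[OF field.subfield_of_algebraics[OF CR_field Rats_subfield]] by (simp add: over_def)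
  from subringE(6)[OF this x]
  show ?thesis using CR_to_alg by (auto simp: over_def)
qed



lemma algebraic_of_nat [simp, intro]: "algebraic (of_nat n :: complex)"
  by (rule rat_imp_algebraic) simp
lemma algebraic_of_int [simp, intro]: "algebraic (of_int n :: complex)"
  by (rule rat_imp_algebraic) simp
lemma algebraic_diff [intro]: fixes x y :: complex shows "algebraic x \<Longrightarrow> algebraic y \<Longrightarrow> algebraic (x - y)"
  using algebraic_add[of x "-y"] by auto
lemma algebraic_sum [intro]: fixes f :: "'a \<Rightarrow> complex"
  shows "(\<And>i. i \<in> S \<Longrightarrow> algebraic (f i)) \<Longrightarrow> algebraic (sum f S)"
  by (induction S rule: infinite_finite_induct) auto
lemma algebraic_power [intro]: fixes x :: complex shows "algebraic x \<Longrightarrow> algebraic (x ^ n)"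
  by (induction n) auto

hide_const (open) Divisibility.prime

locale pval =
  fixes p :: nat and v :: "complex \<Rightarrow> real" and r :: nat
  assumes V: "padic_valuation_alg p v" and pprime: "prime p"
begin

definition II :: "complex \<Rightarrow> bool" where
  "II x \<longleftrightarrow> algebraic x \<and> (x = 0 \<or> v x \<ge> real r)"

lemma vp: "v (of_nat p) = 1" using V unfolding padic_valuation_alg_def by auto
lemma vmult: "algebraic x \<Longrightarrow> algebraic y \<Longrightarrow> x \<noteq> 0 \<Longrightarrow> y \<noteq> 0 \<Longrightarrow> v (x * y) = v x + v y"
  using V unfolding padic_valuation_alg_def by auto
lemma vadd: "algebraic x \<Longrightarrow> algebraic y \<Longrightarrow> x \<noteq> 0 \<Longrightarrow> y \<noteq> 0 \<Longrightarrow> x + y \<noteq> 0 \<Longrightarrow> v (x + y) \<ge> min (v x) (v y)"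
  using V unfolding padic_valuation_alg_def by auto

lemma v1: "v 1 = 0" using vmult[of 1 1] by simp
lemma vm1: "v (-1) = 0" using vmult[of "-1" "-1"] v1 by simp
lemma vneg: "algebraic x \<Longrightarrow> x \<noteq> 0 \<Longrightarrow> v (- x) = v x"
  using vmult[of "-1" x] vm1 by simp

lemma A_add: "integral_at v x \<Longrightarrow> integral_at v y \<Longrightarrow> integral_at v (x + y)"
  unfolding integral_at_def using vadd[of x y] by fastforce
lemma A_mult: "integral_at v x \<Longrightarrow> integral_at v y \<Longrightarrow> integral_at v (x * y)"
  unfolding integral_at_def using vmult[of x y] by fastforce
lemma A_neg: "integral_at v x \<Longrightarrow> integral_at v (- x)"
  unfolding integral_at_def using vneg[of x] by fastforce
lemma A_diff: "integral_at v x \<Longrightarrow> integral_at v y \<Longrightarrow> integral_at v (x - y)"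
  using A_add[of x "-y"] A_neg[of y] by simp
lemma A_nat: "integral_at v (of_nat n)"
proof (induction n)
  case 0 then show ?case by (simp add: integral_at_def)
next
  case (Suc n)
  have "integral_at v 1" by (simp add: integral_at_def v1)
  from A_add[OF Suc this] show ?case by (simp add: add.commute)
qed
lemma A_power: assumes "integral_at v x" shows "integral_at v (x ^ n)"
proof (induction n)
  case 0 then show ?case by (simp add: integral_at_def v1)
next
  case (Suc n) then show ?case using A_mult[OF assms Suc.IH] by simp
qed
lemma A_int: "integral_at v (of_int w)"
proof (cases "w \<ge> 0")
  case True
  then have "(of_int w :: complex) = of_nat (nat w)" by simp
  then show ?thesis using A_nat by metis
next
  case False
  then have "(of_int w :: complex) = - of_nat (nat (- w))" by simp
  then show ?thesis using A_neg[OF A_nat] by metis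
qed

lemma I_add: "II x \<Longrightarrow> II y \<Longrightarrow> II (x + y)"
  unfolding II_def using vadd[of x y] by fastforce
lemma I_neg: "II x \<Longrightarrow> II (- x)"
  unfolding II_def using vneg[of x] by fastforce
lemma I_diff: "II x \<Longrightarrow> II y \<Longrightarrow> II (x - y)"
  using I_add[of x "-y"] I_neg[of y] by simp
lemma I_mult: "integral_at v c \<Longrightarrow> II x \<Longrightarrow> II (c * x)"
  unfolding II_def integral_at_def using vmult[of c x] by fastforce
lemma I_mult2: "integral_at v c \<Longrightarrow> II x \<Longrightarrow> II (x * c)"
  using I_mult[of c x] by (simp add: mult.commute)
lemma I_sum: "(\<And>i. i \<in> S \<Longrightarrow> II (f i)) \<Longrightarrow> II (sum f S)"
proof (induction S rule: infinite_finite_induct)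
  case (insert x F) then show ?case using I_add[of "f x" "sum f F"] by simp
qed (auto simp: II_def)

lemma v_unit: assumes "\<not> p dvd n" shows "v (of_nat n) = 0"
proof -
  have n0: "n \<noteq> 0" using assms by (metis dvd_0_right)
  have ge: "v (of_nat n) \<ge> 0" using A_nat[of n] n0 unfolding integral_at_def by auto
  have "coprime (int n) (int p)"
    using assms pprime by (metis coprime_commute coprime_int_iff prime_imp_coprime_nat)
  then obtain u w :: int where uw: "u * int n + w * int p = 1"
    using bezout_int[of "int n" "int p"] by auto
  have p2: "p \<ge> 2" using pprime prime_ge_2_nat by blast
  show ?thesis
  proof (rule ccontr)
    assume "v (of_nat n) \<noteq> 0"
    then have pos: "v (of_nat n) > 0" using ge by simp
    define XX :: complex where "XX = of_int u * of_nat n"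
    define YY :: complex where "YY = of_int w * of_nat p"
    have XY: "XX + YY = 1" unfolding XX_def YY_def
      using arg_cong[OF uw, of "of_int :: int \<Rightarrow> complex"] by simp
    have u0: "u \<noteq> 0"
    proof
      assume "u = 0"
      then have "w * int p = 1" using uw by simp
      then have "int p dvd 1" by (metis dvd_triv_right)
      then show False using p2 by simp
    qed
    have vu: "v (of_int u) \<ge> 0" using A_int[of u] u0 unfolding integral_at_def by auto
    have vXX: "v XX > 0" unfolding XX_def using vmult[of "of_int u" "of_nat n"] u0 n0 vu pos by simp
    show False
    proof (cases "w = 0")
      case True
      then have "XX = 1" using XY unfolding YY_def by simp
      then show False using vXX v1 by simp
    next
      case False
      have vw: "v (of_int w) \<ge> 0" using A_int[of w] False unfolding integral_at_def by auto
      have vYY: "v YY > 0" unfolding YY_def using vmult[of "of_int w" "of_nat p"] False p2 vw vp by simp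
      have "XX \<noteq> 0" "YY \<noteq> 0" using vXX vYY XX_def YY_def u0 n0 False p2 by auto
      then have "v (XX + YY) \<ge> min (v XX) (v YY)" using vadd[of XX YY] XY unfolding XX_def YY_def by (simp add: algebraic_mult)
      then show False using XY v1 vXX vYY by simp
    qed
  qed
qed

lemma I_cancel: assumes "\<not> p dvd n" "II (of_nat n * x)" "algebraic x" shows "II x"
proof -
  have n0: "n \<noteq> 0" using assms by (metis dvd_0_right)
  show ?thesis
  proof (cases "x = 0")
    case False
    then show ?thesis using assms(2,3) vmult[of "of_nat n" x] v_unit[OF assms(1)] n0 unfolding II_def by auto
  qed (simp add: II_def)
qed

end


lemma hecke_mult:
  assumes "normalized_eigenform k N eps f a" "n \<ge> 1"
  shows "hecke_coeff k eps n a m = a n * a m"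
proof -
  obtain c where c: "\<And>m. hecke_coeff k eps n a m = c * a m"
    using assms unfolding normalized_eigenform_def by blast
  have e1: "eps 1 = 1" "a 1 = 1" using assms(1)
    by (meson normalized_eigenform_def cusp_form_def dirichlet_char_def)+
  have "{d. d dvd gcd 1 n} = {1::nat}" by auto
  then have "hecke_coeff k eps n a 1 = a n" unfolding hecke_coeff_def using e1 by simp
  then have "c = a n" using c[of 1] e1 by simp
  then show ?thesis using c by simp
qed

lemma sq_rel:
  assumes "normalized_eigenform k N eps f a" "d \<ge> 1"
  shows "(\<Sum>e | e dvd d. eps (int e) * of_nat e ^ (k - 1) * a (d * d div (e * e))) = a d * a d"
  using hecke_mult[OF assms, of d] unfolding hecke_coeff_def by simp

lemma eps_period:
  assumes "dirichlet_char N eps"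
  shows "eps (n + int N * int j) = eps n"
proof (induction j)
  case (Suc j)
  have "eps (n + int N * int (Suc j)) = eps ((n + int N * int j) + int N)" by (simp add: algebra_simps)
  also have "\<dots> = eps (n + int N * int j)" using assms unfolding dirichlet_char_def by blast
  finally show ?case using Suc by simp
qed simp

context pval
begin

lemma cong_II: "cong_ppow v r x y \<Longrightarrow> algebraic x \<Longrightarrow> algebraic y \<Longrightarrow> II (x - y)"
  unfolding cong_ppow_def II_def by auto

lemma key:
  assumes ef: "normalized_eigenform k Nf epsf f a"
    and eg: "normalized_eigenform k Ng epsg g b"
    and ab: "\<forall>n. integral_at v (a n) \<and> integral_at v (b n)"
    and ee: "\<forall>n. integral_at v (epsf n) \<and> integral_at v (epsg n)"
    and cg: "\<forall>m. coprime m (Nf * Ng) \<longrightarrow> cong_ppow v r (a m) (b m)"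
  shows "d \<ge> 1 \<Longrightarrow> coprime d (Nf * Ng) \<Longrightarrow>
     II (epsf (int d) * of_nat d ^ (k - 1) - epsg (int d) * of_nat d ^ (k - 1))"
proof (induction d rule: less_induct)
  case (less d)
  define Ef where "Ef e = epsf (int e) * of_nat e ^ (k - 1)" for e
  define Eg where "Eg e = epsg (int e) * of_nat e ^ (k - 1)" for e
  define j where "j e = d * d div (e * e)" for e
  define D where "D = {e. e dvd d}"
  have finD: "finite D" using less.prems(1) unfolding D_def by auto
  have dD: "d \<in> D" unfolding D_def by simp
  have Aa: "integral_at v (a n)" "integral_at v (b n)" for n using ab by auto
  have AE: "integral_at v (Ef e)" "integral_at v (Eg e)" for e
    unfolding Ef_def Eg_def using ee by (auto intro!: A_mult A_power A_nat)
  have IIab: "II (a m - b m)" if "coprime m (Nf * Ng)" for m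
    using cong_II[of "a m" "b m"] cg that Aa unfolding integral_at_def by auto
  have sa: "(\<Sum>e\<in>D. Ef e * a (j e)) = a d * a d"
    using sq_rel[OF ef less.prems(1)] unfolding D_def Ef_def j_def by simp
  have sb: "(\<Sum>e\<in>D. Eg e * b (j e)) = b d * b d"
    using sq_rel[OF eg less.prems(1)] unfolding D_def Eg_def j_def by simp
  have a1: "a 1 = 1" "b 1 = 1" using ef eg by (meson normalized_eigenform_def)+
  have jd: "j d = 1" unfolding j_def using less.prems(1) by simp
  have split: "Ef d - Eg d = (a d * a d - b d * b d) - (\<Sum>e\<in>D - {d}. Ef e * a (j e) - Eg e * b (j e))"
  proof -
    have "a d * a d = Ef d + (\<Sum>e\<in>D - {d}. Ef e * a (j e))"
      using sa[symmetric] sum.remove[OF finD dD, of "\<lambda>e. Ef e * a (j e)"] jd a1 by simp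
    moreover have "b d * b d = Eg d + (\<Sum>e\<in>D - {d}. Eg e * b (j e))"
      using sb[symmetric] sum.remove[OF finD dD, of "\<lambda>e. Eg e * b (j e)"] jd a1 by simp
    ultimately show ?thesis by (simp add: sum_subtractf)
  qed
  have I1: "II (a d * a d - b d * b d)"
  proof -
    have "a d * a d - b d * b d = a d * (a d - b d) + b d * (a d - b d)" by (simp add: algebra_simps)
    then show ?thesis using I_add[OF I_mult[OF Aa(1) IIab[OF less.prems(2)]] I_mult[OF Aa(2) IIab[OF less.prems(2)]]] by simp
  qed
  have I2: "II (Ef e * a (j e) - Eg e * b (j e))" if e: "e \<in> D - {d}" for e
  proof -
    have ed: "e dvd d" "e \<noteq> d" using e unfolding D_def by auto
    have e1: "e \<ge> 1" using ed less.prems(1) by (metis dvd_0_left_iff less_one not_less)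
    have elt: "e < d" using ed less.prems(1) by (simp add: dvd_imp_le le_neq_implies_less)
    have ecop: "coprime e (Nf * Ng)" using ed(1) less.prems(2) coprime_imp_coprime
      by (metis coprime_divisors dvd_refl)
    have IE: "II (Ef e - Eg e)" using less.IH[OF elt e1 ecop] unfolding Ef_def Eg_def .
    have "e * e dvd d * d" using ed(1) by (simp add: mult_dvd_mono)
    then have "j e * (e * e) = d * d" unfolding j_def by simp
    then have "j e dvd d * d" by (metis dvd_triv_left)
    moreover have "coprime (d * d) (Nf * Ng)" using less.prems(2) by simp
    ultimately have jcop: "coprime (j e) (Nf * Ng)" by (metis coprime_divisors dvd_refl)
    have "Ef e * a (j e) - Eg e * b (j e) = Ef e * (a (j e) - b (j e)) + (Ef e - Eg e) * b (j e)"
      by (simp add: algebra_simps)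
    then show ?thesis using I_add[OF I_mult[OF AE(1) IIab[OF jcop]] I_mult2[OF Aa(2) IE]] by simp
  qed
  have "II (\<Sum>e\<in>D - {d}. Ef e * a (j e) - Eg e * b (j e))" by (rule I_sum) (rule I2)
  then have "II (Ef d - Eg d)" unfolding split by (rule I_diff[OF I1])
  then show ?case unfolding Ef_def Eg_def .
qed

end

theorem lemma4p3:
  fixes p k Nf Ng r :: nat and v :: "complex \<Rightarrow> real"
    and epsf epsg :: "int \<Rightarrow> complex" and f g :: "complex \<Rightarrow> complex"
    and a b :: "nat \<Rightarrow> complex"
  assumes "prime p" and "odd p"
    and "padic_valuation_alg p v"
    and "r \<ge> 1"
    and "normalized_eigenform k Nf epsf f a"
    and "normalized_eigenform k Ng epsg g b"
    and "\<not> p dvd Nf * Ng"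
    and "\<forall>n. integral_at v (a n) \<and> integral_at v (b n)"
    and "\<forall>n. integral_at v (epsf n) \<and> integral_at v (epsg n)"
    and "\<forall>m. coprime m (Nf * Ng) \<longrightarrow> cong_ppow v r (a m) (b m)"
  shows "cong_ppow v r (epsf (int p)) (epsg (int p))"
proof -
  interpret pval p v r using assms(1,3) by unfold_locales
  define d0 where "d0 = p + Nf * Ng"
  have cp: "coprime p (Nf * Ng)" using prime_imp_coprime[OF assms(1) assms(7)] .
  have "gcd d0 (Nf * Ng) = gcd p (Nf * Ng)" unfolding d0_def by (rule gcd_add1)
  then have d0cop: "coprime d0 (Nf * Ng)" using cp by (simp add: coprime_iff_gcd_eq_1)
  have d01: "d0 \<ge> 1" unfolding d0_def using assms(1) prime_gt_0_nat by (simp add: Suc_leI add_increasing2)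
  have pnd: "\<not> p dvd d0" unfolding d0_def using assms(7) by (simp add: dvd_add_right_iff)
  have dcf: "dirichlet_char Nf epsf" "dirichlet_char Ng epsg" using assms(5,6)
    by (meson normalized_eigenform_def cusp_form_def)+
  have "int d0 = int p + int Nf * int Ng" unfolding d0_def by simp
  then have ef: "epsf (int d0) = epsf (int p)" and eg: "epsg (int d0) = epsg (int p)"
    using eps_period[OF dcf(1), of "int p" Ng] eps_period[OF dcf(2), of "int p" Nf]
    by (simp_all add: mult.commute)
  have "II (epsf (int d0) * of_nat d0 ^ (k - 1) - epsg (int d0) * of_nat d0 ^ (k - 1))"
    using key[OF assms(5,6,8,9,10) d01 d0cop] .
  then have "II (of_nat (d0 ^ (k - 1)) * (epsf (int p) - epsg (int p)))"
    unfolding ef eg by (simp add: algebra_simps)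
  moreover have "\<not> p dvd d0 ^ (k - 1)"
    using pnd assms(1) by (metis prime_dvd_power_nat one_dvd power_0 prime_nat_iff)
  moreover have "algebraic (epsf (int p) - epsg (int p))"
    using assms(9) unfolding integral_at_def by auto
  ultimately have "II (epsf (int p) - epsg (int p))" using I_cancel by blast
  then show ?thesis unfolding II_def cong_ppow_def by auto
qed

end
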